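(* In the setting and construction described in the context, let $n\in\mathbb{N}$, $k\in\mathbb{N}\cup\{0\}$ and $x\in Z(p_n,\dots,p_{n+k})$. Then there exist pairwise disjointly supported vectors $(y_j)_{j=0}^k$ in $c_{00}$ such that $x=\sum_{j=0}^ky_j$, $\|y_j\|_{\ell^1}=\theta_{p_{n+j}}^{-1}$ for $0\le j\le k$, and $\operatorname{supp}y_j\in[\mathcal{S}_{\eta_n+1},\dots,\mathcal{S}_{\eta_{n+j}+1}]\cap[M_{n+j}]^{<\infty}$ for $0\le j\le k$.
   Context: Standing setting: $(\theta_n)$ nonincreasing null in $(0,1)$; $(\mathcal{F}_n)$ regular families (hereditary, spreading, compact in $[\mathbb{N}]^{<\infty}\subseteq 2^{\mathbb{N}}$); $X=T[(\theta_n,\mathcal{F}_n)]$ as usual (completion of $c_{00}$ under $\|x\|=\max\{\|x\|_{c_0},\sup_n\sup\theta_n\sum_i\|E_ix\|\}$ over $\mathcal{F}_n$-admissible $(E_i)$, i.e. $E_1<\dots<E_k$ with $\{\min E_i\}\in\mathcal{F}_n$); $(e_k)$ unit vectors. $\alpha_n=\iota(\mathcal{F}_n)>1$ (Cantor–Bendixson index), $\alpha=\sup\alpha_n\ne\alpha_n$ for all $n$, $\alpha=\omega^{\omega^\xi}$, $0<\xi<\omega_1$. Schreier families: $\mathcal{S}_0$ = singletons and $\emptyset$, $\mathcal{S}_1=\{F:|F|\le\min F\}$, $\mathcal{S}_{\beta+1}=\mathcal{S}_1[\mathcal{S}_\beta]$, limit $\beta$: $\mathcal{S}_\beta=\{F\in\mathcal{S}_{\beta_k}\text{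 some }k\le\min F\}$ for a fixed $\beta_k\uparrow\beta$. $\mathcal{M}[\mathcal{N}]$ = unions of $\mathcal{M}$-admissible sequences of members of $\mathcal{N}$; $[\mathcal{M}_1]=\mathcal{M}_1$, $[\mathcal{M}_1,\dots,\mathcal{M}_{i+1}]=[\mathcal{M}_1,\dots,\mathcal{M}_i][\mathcal{M}_{i+1}]$, empty list gives $\mathcal{S}_0$. $\|y\|_{\mathcal{F}}=\sup_{F\in\mathcal{F}}\sum_{k\in F}|y_k|$. $\ell(\beta)$ = leading exponent of the Cantor normal form. $\gamma(\varepsilon,m)=\max\{\ell(\alpha_{n_s}\cdots\alpha_{n_1}):\varepsilon\theta_{n_1}\cdots\theta_{n_s}>\theta_m\}$ ($\max\emptyset=0$). Assume $(\dagger)$: there is $\varepsilon>0$ such that for every $\beta<\omega^\xi$ some $m$ has $\gamma(\varepsilon,m)+2+\beta<\ell(\alpha_m)$; fix such $\varepsilon\in(0,1)$. $K_{\delta,p,\eta}=\{(0,n_1,\dots,n_s):s\ge0,\ \theta_{n_1}\cdots\theta_{n_s}>\delta\theta_p,\ \ell(\alpha_{n_s}\cdots\alpha_{n_1})<\eta\}$ (finite). Construction: $(\beta_n)$ is the sequence increasing to $\omega^\xi$ defining $\mathcal{S}_{\omega^\xi}$; $M_0$ infinite. Choose $p_1$ with $\theta_{p_1}\le\varepsilon^2/4$ and $\gamma(\varepsilon,p_1)+2+\beta_1<\ell(\alpha_{p_1})$, $\eta_1=\gamma(\varepsilon,p_1)+1$, $q_1$ with $\theta_{q_1}\le\varepsilon\theta_{p_1}/4$,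 infinite $M_1\subseteq M_0$ with $\mathcal{S}_{\beta_1}[\mathcal{S}_{\eta_1+1}]\cap[M_1]^{<\infty}\subseteq\mathcal{F}_{p_1}$ and $[\mathcal{F}_{n_1},\dots,\mathcal{F}_{n_s}]\cap[M_1]^{<\infty}\subseteq\mathcal{S}_{\eta_1}$ for all $(0,n_1,\dots,n_s)\in K_{4^{-1},p_1,\eta_1}$. For $n\ge2$: $p_n>q_{n-1}$ with $\theta_{p_n}\le\varepsilon^2/4^n$ and $\gamma(\varepsilon,p_n)+2+\gamma(\varepsilon,q_{n-1})+2+\eta_{n-1}+1+\dots+\eta_1+1+\beta_n<\ell(\alpha_{p_n})$; $\eta_n=\gamma(\varepsilon,p_n)+\gamma(\varepsilon,q_{n-1})+1$; $q_n>p_n$ with $\theta_{q_n}\le\varepsilon\theta_{p_n}/4^n$; infinite $M_n\subseteq M_{n-1}$ with $\mathcal{S}_{\beta_n}[\mathcal{S}_{\eta_1+1},\dots,\mathcal{S}_{\eta_n+1}]\cap[M_n]^{<\infty}\subseteq\mathcal{F}_{p_n}$ and $[\mathcal{F}_{n_1},\dots,\mathcal{F}_{n_s}]\cap[M_n]^{<\infty}\subseteq\mathcal{S}_{\eta_n}$ for all $(0,n_1,\dots,n_s)\in K_{4^{-n},p_n,\eta_n}$. $Z(p_n)$ is the set of $x\in c_{00}$ with $\|x\|_{\ell^1}=\theta_{p_n}^{-1}$, $\operatorname{supp}x\in\mathcal{S}_{\eta_n+1}\cap[M_n]^{<\infty}$, and $\|x\|_{\mathcal{S}_{\eta_n}}\le4^{-n}(|K_{4^{-n},p_n,\eta_n}|+1)^{-1}$.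 Inductively, $Z(p_n,\dots,p_{n+k})$ ($k\ge1$) is the set of vectors $\theta_{p_n}^{-1}\sum_{i=1}^ra_ie_{m_i}+\sum_{i=1}^ra_iz_i$ with $m_1<\operatorname{supp}z_1<\dots<m_r<\operatorname{supp}z_r$, $\theta_{p_n}^{-1}\sum_ia_ie_{m_i}\in Z(p_n)$ and $z_i\in Z(p_{n+1},\dots,p_{n+k})$. *)

theory Defs
  imports Complex_Main
begin

text \<open>A limit node carries its fundamental sequence (indexed from 1), which is
exactly the data the paper fixes to define Schreier families at limit ordinals.\<close>
datatype ord = OZ | OS ord | OL "nat \<Rightarrow> ord"

definition S0 :: "nat set set" where
  "S0 = {{}} \<union> {{k} | k. True}"

definition S1 :: "nat set set" where
  "S1 = {F. finite F \<and> (\<forall>m\<in>F. card F \<le> m)}"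

definition blk_less :: "nat set \<Rightarrow> nat set \<Rightarrow> bool" where
  "blk_less A B \<longleftrightarrow> (\<forall>a\<in>A. \<forall>b\<in>B. a < b)"

text \<open>M[N]: unions of M-admissible sequences E_1 < ... < E_k of (nonempty) members of N,
i.e. {min E_i} in M.\<close>
definition bracket :: "nat set set \<Rightarrow> nat set set \<Rightarrow> nat set set" where
  "bracket \<M> \<N> = {\<Union>(set Es) | Es.
      (\<forall>E\<in>set Es. E \<in> \<N> \<and> E \<noteq> {}) \<and> sorted_wrt blk_less Es \<and> set (map Min Es) \<in> \<M>}"

text \<open>[M_1,...,M_j] = [M_1,...,M_{j-1}][M_j]; the empty list gives S_0.\<close>
fun blist :: "nat set set list \<Rightarrow> nat set set" where
  "blist [] = S0"
| "blist (\<M> # Ms) = foldl bracket \<M> Ms"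

primrec schreier :: "ord \<Rightarrow> nat set set" where
  "schreier OZ = S0"
| "schreier (OS b) = bracket S1 (schreier b)"
| "schreier (OL f) = {F. \<exists>k\<ge>1. (\<forall>m\<in>F. k \<le> m) \<and> F \<in> (schreier \<circ> f) k}"

definition hereditary :: "nat set set \<Rightarrow> bool" where
  "hereditary \<F> \<longleftrightarrow> (\<forall>A\<in>\<F>. \<forall>B. B \<subseteq> A \<longrightarrow> B \<in> \<F>)"

definition spreading :: "nat set set \<Rightarrow> bool" where
  "spreading \<F> \<longleftrightarrow> (\<forall>a b. \<forall>k::nat. strict_mono_on {..<k} a \<and> strict_mono_on {..<k} b
       \<and> (\<forall>i<k. a i \<le> b i) \<and> a ` {..<k} \<in> \<F> \<longrightarrow> b ` {..<k} \<in> \<F>)"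

text \<open>compact subset of [N]^{<\<infinity>} in 2^N (product topology): all members finite and
closed under pointwise limits of sequences (2^N is compact metrizable).\<close>
definition compact_family :: "nat set set \<Rightarrow> bool" where
  "compact_family \<F> \<longleftrightarrow> (\<forall>A\<in>\<F>. finite A) \<and>
     (\<forall>(As :: nat \<Rightarrow> nat set) A. (\<forall>j. As j \<in> \<F>) \<and>
        (\<forall>t. \<forall>\<^sub>F j in sequentially. (t \<in> As j \<longleftrightarrow> t \<in> A)) \<longrightarrow> A \<in> \<F>)"

definition regular_family :: "nat set set \<Rightarrow> bool" where
  "regular_family \<F> \<longleftrightarrow> hereditary \<F> \<and> spreading \<F> \<and> compact_family \<F>"

definition supp :: "(nat \<Rightarrow> real) \<Rightarrow> nat set" where
  "supp x = {t. x t \<noteq> 0}"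

definition c00 :: "(nat \<Rightarrow> real) set" where
  "c00 = {x. finite (supp x)}"

definition l1norm :: "(nat \<Rightarrow> real) \<Rightarrow> real" where
  "l1norm x = (\<Sum>t\<in>supp x. \<bar>x t\<bar>)"

definition unitv :: "nat \<Rightarrow> nat \<Rightarrow> real" where
  "unitv m = (\<lambda>t. if t = m then 1 else 0)"

definition famnorm :: "nat set set \<Rightarrow> (nat \<Rightarrow> real) \<Rightarrow> real" where
  "famnorm \<F> x = (SUP F\<in>\<F>. \<Sum>t\<in>F. \<bar>x t\<bar>)"

text \<open>Zset \<theta> p \<eta> M Kc n k = Z(p_n,...,p_{n+k}); Kc n stands for |K_{4^{-n},p_n,\<eta>_n}|.\<close>
definition Z1 :: "(nat \<Rightarrow> real) \<Rightarrow> (nat \<Rightarrow> nat) \<Rightarrow> (nat \<Rightarrow> ord) \<Rightarrow> (nat \<Rightarrow> nat set)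
    \<Rightarrow> (nat \<Rightarrow> nat) \<Rightarrow> nat \<Rightarrow> (nat \<Rightarrow> real) set" where
  "Z1 \<theta> p \<eta> M Kc n = {x. x \<in> c00 \<and> l1norm x = 1 / \<theta> (p n)
      \<and> supp x \<in> schreier (OS (\<eta> n)) \<and> supp x \<subseteq> M n
      \<and> famnorm (schreier (\<eta> n)) x \<le> 1 / (4 ^ n * (real (Kc n) + 1))}"

primrec Zset :: "(nat \<Rightarrow> real) \<Rightarrow> (nat \<Rightarrow> nat) \<Rightarrow> (nat \<Rightarrow> ord) \<Rightarrow> (nat \<Rightarrow> nat set)
    \<Rightarrow> (nat \<Rightarrow> nat) \<Rightarrow> nat \<Rightarrow> nat \<Rightarrow> (nat \<Rightarrow> real) set" where
  "Zset \<theta> p \<eta> M Kc n 0 = Z1 \<theta> p \<eta> M Kc n"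
| "Zset \<theta> p \<eta> M Kc n (Suc k) = {x. \<exists>(r::nat) (a::nat \<Rightarrow> real) (m::nat \<Rightarrow> nat) (z::nat \<Rightarrow> nat \<Rightarrow> real).
      (\<forall>i<r. (\<forall>t\<in>supp (z i). m i < t) \<and> (Suc i < r \<longrightarrow> (\<forall>t\<in>supp (z i). t < m (Suc i))))
      \<and> (\<lambda>t. (1 / \<theta> (p n)) * (\<Sum>i<r. a i * unitv (m i) t)) \<in> Z1 \<theta> p \<eta> M Kc n
      \<and> (\<forall>i<r. z i \<in> Zset \<theta> p \<eta> M Kc (Suc n) k)
      \<and> x = (\<lambda>t. (1 / \<theta> (p n)) * (\<Sum>i<r. a i * unitv (m i) t) + (\<Sum>i<r. a i * z i t))}"

end

theory Submission
  imports Defs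
begin


lemma finite_schreier: "F \<in> schreier b \<Longrightarrow> finite F"
proof (induction b arbitrary: F)
  case OZ then show ?case by (auto simp: S0_def)
next
  case (OS b) then show ?case by (auto simp: bracket_def)
next
  case (OL g) then show ?case by auto
qed

definition spr :: "nat set set \<Rightarrow> bool" where
  "spr F \<longleftrightarrow> (\<forall>A\<in>F. \<forall>f. strict_mono_on A f \<and> (\<forall>a\<in>A. a \<le> f a) \<longrightarrow> f ` A \<in> F)"

lemma Min_image_smono:
  assumes "finite E" "E \<noteq> {}" "strict_mono_on E f"
  shows "Min (f ` E) = f (Min E)"
proof (rule Min_eqI)
  show "finite (f ` E)" using assms by auto
  show "f (Min E) \<in> f ` E" using assms by auto
  fix y assume "y \<in> f ` E"
  then obtain e where e: "e \<in> E" "y = f e" by auto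
  have "Min E \<le> e" using e assms by auto
  then show "f (Min E) \<le> y"
  proof (cases "Min E = e")
    case True then show ?thesis using e by simp
  next
    case False then have "Min E < e" using \<open>Min E \<le> e\<close> by simp
    then show ?thesis using e assms strict_mono_onD[OF assms(3), of "Min E" e] by simp
  qed
qed

lemma spr_S0: "spr S0"
  unfolding spr_def S0_def by auto

lemma spr_S1: "spr S1"
  unfolding spr_def S1_def
proof (intro ballI allI impI)
  fix A f assume A: "A \<in> {F. finite F \<and> (\<forall>m\<in>F. card F \<le> m)}"
    and f: "strict_mono_on A f \<and> (\<forall>a\<in>A. a \<le> f a)"
  have "card (f ` A) = card A" using f strict_mono_on_imp_inj_on card_image by blast
  then show "f ` A \<in> {F. finite F \<and> (\<forall>m\<in>F. card F \<le> m)}"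
    using A f by fastforce
qed

lemma sorted_wrt_concat_I:
  "(\<forall>xs\<in>set xss. sorted_wrt R xs) \<Longrightarrow> sorted_wrt (\<lambda>xs ys. \<forall>x\<in>set xs. \<forall>y\<in>set ys. R x y) xss
    \<Longrightarrow> sorted_wrt R (concat xss)"
  by (induction xss) (auto simp: sorted_wrt_append)

lemma spr_bracket:
  assumes X: "spr X" and N: "spr N" and fin: "\<forall>E\<in>N. finite E"
  shows "spr (bracket X N)"
  unfolding spr_def
proof (intro ballI allI impI)
  fix A f assume A: "A \<in> bracket X N" and f: "strict_mono_on A f \<and> (\<forall>a\<in>A. a \<le> f a)"
  obtain Es where Es: "\<forall>E\<in>set Es. E \<in> N \<and> E \<noteq> {}" "sorted_wrt blk_less Es"
    "set (map Min Es) \<in> X" "A = \<Union>(set Es)"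
    using A unfolding bracket_def by blast
  have sub: "E \<subseteq> A" if "E \<in> set Es" for E using Es(4) that by auto
  have smE: "strict_mono_on E f" if "E \<in> set Es" for E
    using f sub[OF that] by (meson monotone_on_subset)
  have "\<forall>E\<in>set (map ((`) f) Es). E \<in> N \<and> E \<noteq> {}"
  proof
    fix E' assume "E' \<in> set (map ((`) f) Es)"
    then obtain E where E: "E \<in> set Es" "E' = f ` E" by auto
    have "f ` E \<in> N" using N Es(1) E(1) smE[OF E(1)] f sub[OF E(1)]
      unfolding spr_def by blast
    then show "E' \<in> N \<and> E' \<noteq> {}" using E Es(1) by auto
  qed
  moreover have "sorted_wrt blk_less (map ((`) f) Es)"
    unfolding sorted_wrt_map
    using Es(2)
  proof (rule sorted_wrt_mono_rel[rotated])
    fix E1 E2 assume "E1 \<in> set Es" "E2 \<in> set Es" "blk_less E1 E2"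
    then show "blk_less (f ` E1) (f ` E2)"
      using sub f unfolding blk_less_def by (auto intro: strict_mono_onD[of A f])
  qed
  moreover have "set (map Min (map ((`) f) Es)) = f ` set (map Min Es)"
  proof -
    have "Min (f ` E) = f (Min E)" if "E \<in> set Es" for E
      using Min_image_smono[OF _ _ smE[OF that]] fin Es(1) that by auto
    then show ?thesis by auto
  qed
  moreover have "f ` set (map Min Es) \<in> X"
  proof -
    have "set (map Min Es) \<subseteq> A"
      using Es(1) Es(4) fin by auto
    then have "strict_mono_on (set (map Min Es)) f \<and> (\<forall>a\<in>set (map Min Es). a \<le> f a)"
      using f by (meson monotone_on_subset subsetD)
    then show ?thesis using X Es(3) unfolding spr_def by blast
  qed
  moreover have "f ` A = \<Union>(set (map ((`) f) Es))" using Es(4) by auto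
  ultimately show "f ` A \<in> bracket X N" unfolding bracket_def by (smt (verit) mem_Collect_eq)
qed

lemma spr_schreier: "spr (schreier b)"
proof (induction b)
  case OZ then show ?case by (simp add: spr_S0)
next
  case (OS b) then show ?case
    using spr_bracket[OF spr_S1 OS] finite_schreier by auto
next
  case (OL g)
  show ?case unfolding spr_def
  proof (intro ballI allI impI)
    fix A f assume A: "A \<in> schreier (OL g)" and f: "strict_mono_on A f \<and> (\<forall>a\<in>A. a \<le> f a)"
    then obtain k where k: "k \<ge> 1" "\<forall>m\<in>A. k \<le> m" "A \<in> schreier (g k)" by auto
    have "f ` A \<in> schreier (g k)" using OL[of "g k"] k(3) f unfolding spr_def by auto
    moreover have "\<forall>m\<in>f ` A. k \<le> m" using k(2) f by force
    ultimately show "f ` A \<in> schreier (OL g)" using k(1) by auto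
  qed
qed



lemma bracket_mono: "X \<subseteq> X' \<Longrightarrow> bracket X N \<subseteq> bracket X' N"
  unfolding bracket_def by blast

lemma Min_Union_fin:
  assumes "finite S" "S \<noteq> {}" "\<forall>E\<in>S. finite E \<and> E \<noteq> {}"
  shows "Min (\<Union>S) = Min (Min ` S)"
proof -
  have fU: "finite (\<Union>S)" "\<Union>S \<noteq> {}" using assms by auto
  obtain E where E: "E \<in> S" "Min (\<Union>S) \<in> E" using Min_in[OF fU] by auto
  have a: "Min (Min ` S) \<le> Min (\<Union>S)"
    using E assms by (meson Min.coboundedI Min_le dual_order.trans finite_imageI imageI)
  obtain E0 where E0: "E0 \<in> S" "Min (Min ` S) = Min E0"
  proof -
    have "Min (Min ` S) \<in> Min ` S" using Min_in[of "Min ` S"] assms by auto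
    then show ?thesis using that by blast
  qed
  have "Min (\<Union>S) \<le> Min E0" using E0 assms fU by (meson Min_in Min_le UnionI)
  then show ?thesis using a E0 by simp
qed

lemma bracket_assoc:
  assumes finP: "\<forall>E\<in>P. finite E"
  shows "bracket X (bracket N P) \<subseteq> bracket (bracket X N) P"
proof
  fix U assume "U \<in> bracket X (bracket N P)"
  then obtain Fs where Fs: "\<forall>F\<in>set Fs. F \<in> bracket N P \<and> F \<noteq> {}" "sorted_wrt blk_less Fs"
    "set (map Min Fs) \<in> X" "U = \<Union>(set Fs)"
    unfolding bracket_def by blast
  have "\<forall>F\<in>set Fs. \<exists>Es. (\<forall>E\<in>set Es. E \<in> P \<and> E \<noteq> {}) \<and> sorted_wrt blk_less Es
      \<and> set (map Min Es) \<in> N \<and> F = \<Union>(set Es)"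
    using Fs(1) unfolding bracket_def by blast
  then obtain g where g: "\<And>F. F \<in> set Fs \<Longrightarrow> (\<forall>E\<in>set (g F). E \<in> P \<and> E \<noteq> {}) \<and> sorted_wrt blk_less (g F)
      \<and> set (map Min (g F)) \<in> N \<and> F = \<Union>(set (g F))"
    by metis
  define Es where "Es = concat (map g Fs)"
  have Es1: "\<forall>E\<in>set Es. E \<in> P \<and> E \<noteq> {}" using g unfolding Es_def by auto
  have Es2: "sorted_wrt blk_less Es"
    unfolding Es_def
  proof (rule sorted_wrt_concat_I)
    show "\<forall>xs\<in>set (map g Fs). sorted_wrt blk_less xs" using g by auto
    show "sorted_wrt (\<lambda>xs ys. \<forall>x\<in>set xs. \<forall>y\<in>set ys. blk_less x y) (map g Fs)"
      unfolding sorted_wrt_map using Fs(2)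
    proof (rule sorted_wrt_mono_rel[rotated])
      fix F1 F2 assume "F1 \<in> set Fs" "F2 \<in> set Fs" "blk_less F1 F2"
      then show "\<forall>x\<in>set (g F1). \<forall>y\<in>set (g F2). blk_less x y"
        using g[of F1] g[of F2] unfolding blk_less_def by blast
    qed
  qed
  define Ms where "Ms = map (\<lambda>F. set (map Min (g F))) Fs"
  have minF: "Min (set (map Min (g F))) = Min F" if "F \<in> set Fs" for F
  proof -
    have "F = \<Union>(set (g F))" using g that by blast
    moreover have "set (g F) \<noteq> {}"
    proof
      assume "set (g F) = {}"
      moreover have "F = \<Union>(set (g F))" using g that by blast
      ultimately have "F = {}" by simp
      then show False using Fs(1) that by auto
    qed
    moreover have "\<forall>E\<in>set (g F). finite E \<and> E \<noteq> {}" using g that finP by blast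
    ultimately show ?thesis using Min_Union_fin[of "set (g F)"] by simp
  qed
  have minin: "Min x \<in> F" if "F \<in> set Fs" "x \<in> set (g F)" for F x
  proof -
    have "x \<in> P" "x \<noteq> {}" using g that by blast+
    then have "Min x \<in> x" using finP by auto
    moreover have "F = \<Union>(set (g F))" using g that by blast
    ultimately show ?thesis using that by blast
  qed
  have "set (map Min Es) \<in> bracket X N"
  proof -
    have "\<forall>E\<in>set Ms. E \<in> N \<and> E \<noteq> {}"
      using g Fs(1) unfolding Ms_def by fastforce
    moreover have "sorted_wrt blk_less Ms"
      unfolding Ms_def sorted_wrt_map using Fs(2)
    proof (rule sorted_wrt_mono_rel[rotated])
      fix F1 F2 assume a: "F1 \<in> set Fs" "F2 \<in> set Fs" "blk_less F1 F2"
      have "\<forall>x\<in>set (map Min (g F1)). x \<in> F1"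
        using minin a by auto
      moreover have "\<forall>x\<in>set (map Min (g F2)). x \<in> F2"
        using minin a by auto
      ultimately show "blk_less (set (map Min (g F1))) (set (map Min (g F2)))"
        using a(3) unfolding blk_less_def by blast
    qed
    moreover have "set (map Min Ms) = set (map Min Fs)"
      unfolding Ms_def using minF by auto
    moreover have "set (map Min Es) = \<Union>(set Ms)"
      unfolding Es_def Ms_def by auto
    ultimately show ?thesis using Fs(3) unfolding bracket_def by (smt (verit) mem_Collect_eq)
  qed
  moreover have "U = \<Union>(set Es)"
  proof -
    have "\<Union>(set Es) = (\<Union>F\<in>set Fs. \<Union>(set (g F)))" unfolding Es_def by auto
    also have "\<dots> = (\<Union>F\<in>set Fs. F)" using g by (intro SUP_cong) auto
    finally show ?thesis using Fs(4) by simp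
  qed
  ultimately show "U \<in> bracket (bracket X N) P"
    using Es1 Es2 unfolding bracket_def by (smt (verit) mem_Collect_eq)
qed

lemma foldl_assoc:
  "\<forall>C\<in>set Ls. \<forall>E\<in>C. finite E \<Longrightarrow> bracket X (foldl bracket B Ls) \<subseteq> foldl bracket (bracket X B) Ls"
proof (induction Ls rule: rev_induct)
  case Nil then show ?case by simp
next
  case (snoc C Ls)
  have "bracket X (foldl bracket B (Ls @ [C])) = bracket X (bracket (foldl bracket B Ls) C)" by simp
  also have "\<dots> \<subseteq> bracket (bracket X (foldl bracket B Ls)) C"
    using bracket_assoc snoc.prems by simp
  also have "\<dots> \<subseteq> bracket (foldl bracket (bracket X B) Ls) C"
    using bracket_mono snoc by simp
  finally show ?case by simp
qed

lemma blist_cons: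
  assumes "L \<noteq> []" "\<forall>C\<in>set L. \<forall>E\<in>C. finite E"
  shows "bracket X (blist L) \<subseteq> blist (X # L)"
proof -
  obtain B Ls where L: "L = B # Ls" using assms(1) by (cases L) auto
  have "bracket X (foldl bracket B Ls) \<subseteq> foldl bracket (bracket X B) Ls"
    using foldl_assoc assms(2) L by simp
  then show ?thesis using L by simp
qed



definition decomp where
 "decomp \<theta> p \<eta> M n k x y \<longleftrightarrow>
           (\<forall>j\<le>k. y j \<in> c00)
         \<and> (\<forall>j\<le>k. \<forall>j'\<le>k. j \<noteq> j' \<longrightarrow> supp (y j) \<inter> supp (y j') = {})
         \<and> x = (\<lambda>t. \<Sum>j\<le>k. y j t)
         \<and> (\<forall>j\<le>k. l1norm (y j) = 1 / \<theta> (p (n + j)))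
         \<and> (\<forall>j\<le>k. supp (y j) \<in> blist (map (\<lambda>i. schreier (OS (\<eta> i))) [n..<Suc (n + j)])
                 \<and> supp (y j) \<subseteq> M (n + j))"

lemma l1norm_superset: "finite S \<Longrightarrow> supp y \<subseteq> S \<Longrightarrow> l1norm y = (\<Sum>t\<in>S. \<bar>y t\<bar>)"
  unfolding l1norm_def by (rule sum.mono_neutral_left) (auto simp: supp_def)

lemma l1norm_pos_supp: "l1norm y > 0 \<Longrightarrow> supp y \<noteq> {}"
  by (auto simp: l1norm_def)

lemma sum_single: "finite J \<Longrightarrow> j \<in> J \<Longrightarrow> (\<And>j'. j' \<in> J \<Longrightarrow> j' \<noteq> j \<Longrightarrow> f j' = 0) \<Longrightarrow> sum f J = f j"
proof -
  assume a: "finite J" "j \<in> J" "\<And>j'. j' \<in> J \<Longrightarrow> j' \<noteq> j \<Longrightarrow> f j' = 0"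
  have "sum f J = sum f {j}"
    by (rule sum.mono_neutral_right) (use a in auto)
  then show ?thesis by simp
qed

lemma base_case:
  assumes "x \<in> Z1 \<theta> p \<eta> M Kc n"
  shows "decomp \<theta> p \<eta> M n 0 x (\<lambda>_. x)"
  using assms unfolding decomp_def Z1_def by auto



lemma step:
  assumes th: "\<forall>i. 0 < \<theta> i"
  and ord: "\<forall>i<r. (\<forall>t\<in>supp (z i). m i < t) \<and> (Suc i < r \<longrightarrow> (\<forall>t\<in>supp (z i). t < m (Suc i)))"
  and y0Z: "(\<lambda>t. (1 / \<theta> (p n)) * (\<Sum>i<r. a i * unitv (m i) t)) \<in> Z1 \<theta> p \<eta> M Kc n"
  and W: "\<And>i. i < r \<Longrightarrow> decomp \<theta> p \<eta> M (Suc n) k (z i) (W i)"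
  and xeq: "x = (\<lambda>t. (1 / \<theta> (p n)) * (\<Sum>i<r. a i * unitv (m i) t) + (\<Sum>i<r. a i * z i t))"
  shows "\<exists>Y. decomp \<theta> p \<eta> M n (Suc k) x Y"
proof -
  define c where "c = 1 / \<theta> (p n)"
  have cpos: "c > 0" using th unfolding c_def by auto
  define y0 where "y0 = (\<lambda>t. c * (\<Sum>i<r. a i * unitv (m i) t))"
  have y0Z': "y0 \<in> Z1 \<theta> p \<eta> M Kc n" using y0Z unfolding y0_def c_def .
  have Wc00: "\<And>i j. i < r \<Longrightarrow> j \<le> k \<Longrightarrow> W i j \<in> c00"
    and Wdisj: "\<And>i j j'. i < r \<Longrightarrow> j \<le> k \<Longrightarrow> j' \<le> k \<Longrightarrow> j \<noteq> j' \<Longrightarrow> supp (W i j) \<inter> supp (W i j') = {}"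
    and Wsum: "\<And>i. i < r \<Longrightarrow> z i = (\<lambda>t. \<Sum>j\<le>k. W i j t)"
    and Wl1: "\<And>i j. i < r \<Longrightarrow> j \<le> k \<Longrightarrow> l1norm (W i j) = 1 / \<theta> (p (Suc n + j))"
    and Wbl: "\<And>i j. i < r \<Longrightarrow> j \<le> k \<Longrightarrow> supp (W i j) \<in> blist (map (\<lambda>i. schreier (OS (\<eta> i))) [Suc n..<Suc (Suc n + j)])"
    and WM: "\<And>i j. i < r \<Longrightarrow> j \<le> k \<Longrightarrow> supp (W i j) \<subseteq> M (Suc n + j)"
    using W unfolding decomp_def by blast+
  have zW: "z i t = W i j t" if "i < r" "j \<le> k" "t \<in> supp (W i j)" for i j t
  proof -
    have "z i t = (\<Sum>j'\<le>k. W i j' t)" using Wsum[OF that(1)] by metis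
    also have "\<dots> = W i j t"
    proof (rule sum_single)
      fix j' assume "j' \<in> {..k}" "j' \<noteq> j"
      then show "W i j' t = 0" using Wdisj[OF that(1), of j j'] that by (auto simp: supp_def)
    qed (use that in auto)
    finally show ?thesis .
  qed
  have suppW: "supp (W i j) \<subseteq> supp (z i)" if "i < r" "j \<le> k" for i j
    using zW[OF that] by (auto simp: supp_def)
  have Wne: "supp (W i j) \<noteq> {}" if "i < r" "j \<le> k" for i j
    using Wl1[OF that] th by (intro l1norm_pos_supp) auto
  have zne: "supp (z i) \<noteq> {}" if "i < r" for i
    using Wne[OF that, of 0] suppW[OF that, of 0] by auto
  have mlt: "m i < m (Suc i)" if "Suc i < r" for i
  proof -
    have "i < r" using that by simp
    then obtain t where t: "t \<in> supp (z i)" using zne[of i] by auto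
    have "m i < t" using ord t \<open>i < r\<close> by blast
    moreover have "t < m (Suc i)" using ord t \<open>i < r\<close> that by blast
    ultimately show ?thesis by simp
  qed
  have mmono: "m i < m i'" if "i < i'" "i' < r" for i i'
    using that
  proof (induction i')
    case 0 then show ?case by simp
  next
    case (Suc i')
    show ?case
    proof (cases "i = i'")
      case True then show ?thesis using mlt Suc by simp
    next
      case False then have "m i < m i'" using Suc by simp
      then show ?thesis using mlt[of i'] Suc by simp
    qed
  qed
  have mle: "m i \<le> m i'" if "i \<le> i'" "i' < r" for i i'
    using mmono[of i i'] that by (cases "i = i'") auto
  have zloc1: "m i' < t" if "i < r" "t \<in> supp (z i)" "i' \<le> i" for i t i'
    using mle[of i' i] ord that by force
  have zloc2: "t < m i'" if "i < r" "t \<in> supp (z i)" "i < i'" "i' < r" for i t i'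
  proof -
    have "t < m (Suc i)" using ord that by auto
    then show ?thesis using mle[of "Suc i" i'] that by simp
  qed
  have zdisj: "supp (z i) \<inter> supp (z i') = {}" if "i < r" "i' < r" "i \<noteq> i'" for i i'
  proof (rule ccontr)
    assume "supp (z i) \<inter> supp (z i') \<noteq> {}"
    then obtain t where t: "t \<in> supp (z i)" "t \<in> supp (z i')" by auto
    show False
    proof (cases "i < i'")
      case True then show False using zloc2[of i t i'] zloc1[of i' t i'] t that by force
    next
      case False then have "i' < i" using that by simp
      then show False using zloc2[of i' t i] zloc1[of i t i] t that by force
    qed
  qed
  have mnz: "m i' \<notin> supp (z i)" if "i < r" "i' < r" for i i'
    using zloc1[of i "m i'" i'] zloc2[of i "m i'" i'] that by (cases "i' \<le> i") auto
  have injm: "inj_on m {..<r}"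
  proof (rule inj_onI)
    fix i i' assume "i \<in> {..<r}" "i' \<in> {..<r}" "m i = m i'"
    then show "i = i'" using mmono[of i i'] mmono[of i' i] by (cases i i' rule: linorder_cases) auto
  qed
  have y0m: "y0 (m i) = c * a i" if "i < r" for i
  proof -
    have "(\<Sum>i'<r. a i' * unitv (m i') (m i)) = a i * unitv (m i) (m i)"
    proof (rule sum_single)
      fix i' assume "i' \<in> {..<r}" "i' \<noteq> i"
      then show "a i' * unitv (m i') (m i) = 0" using injm that unfolding unitv_def inj_on_def by auto
    qed (use that in auto)
    then show ?thesis unfolding y0_def unitv_def by simp
  qed
  have y0o: "y0 t = 0" if "t \<notin> m ` {..<r}" for t
  proof -
    have "(\<Sum>i<r. a i * unitv (m i) t) = 0"
      by (rule sum.neutral) (use that in \<open>auto simp: unitv_def\<close>)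
    then show ?thesis by (simp add: y0_def)
  qed
  have suppy0: "supp y0 = m ` {i. i < r \<and> a i \<noteq> 0}"
  proof
    show "supp y0 \<subseteq> m ` {i. i < r \<and> a i \<noteq> 0}"
    proof
      fix t assume t: "t \<in> supp y0"
      then have "t \<in> m ` {..<r}" using y0o unfolding supp_def by blast
      then obtain i where "i < r" "t = m i" by auto
      then show "t \<in> m ` {i. i < r \<and> a i \<noteq> 0}" using t y0m unfolding supp_def by auto
    qed
    show "m ` {i. i < r \<and> a i \<noteq> 0} \<subseteq> supp y0"
      using y0m cpos unfolding supp_def by auto
  qed
  have asum: "(\<Sum>i<r. \<bar>a i\<bar>) = 1"
  proof -
    have "c = l1norm y0" using y0Z' unfolding Z1_def c_def by auto
    also have "\<dots> = (\<Sum>t\<in>m ` {..<r}. \<bar>y0 t\<bar>)"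
      by (rule l1norm_superset) (use suppy0 in auto)
    also have "\<dots> = (\<Sum>i<r. \<bar>y0 (m i)\<bar>)" using sum.reindex[OF injm] by simp
    also have "\<dots> = (\<Sum>i<r. c * \<bar>a i\<bar>)" using y0m cpos by (simp add: abs_mult)
    also have "\<dots> = c * (\<Sum>i<r. \<bar>a i\<bar>)" by (simp add: sum_distrib_left)
    finally show ?thesis using cpos by simp
  qed
  define Y where "Y j = (if j = 0 then y0 else (\<lambda>t. \<Sum>i<r. a i * W i (j - 1) t))" for j
  have Y0: "Y 0 = y0" unfolding Y_def by simp
  have YSuc: "Y (Suc j) = (\<lambda>t. \<Sum>i<r. a i * W i j t)" for j unfolding Y_def by simp
  have YS: "Y (Suc j) t = a i * W i j t" if "j \<le> k" "i < r" "t \<in> supp (z i)" for j i t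
  proof -
    have "(\<Sum>i'<r. a i' * W i' j t) = a i * W i j t"
    proof (rule sum_single)
      fix i' assume i': "i' \<in> {..<r}" "i' \<noteq> i"
      then have "t \<notin> supp (W i' j)" using suppW[of i' j] zdisj[of i i'] that by auto
      then show "a i' * W i' j t = 0" unfolding supp_def by simp
    qed (use that in auto)
    then show ?thesis unfolding YSuc by simp
  qed
  have YO: "Y (Suc j) t = 0" if "j \<le> k" "\<forall>i<r. t \<notin> supp (z i)" for j t
  proof -
    have "(\<Sum>i<r. a i * W i j t) = 0"
    proof (rule sum.neutral, intro ballI)
      fix i assume "i \<in> {..<r}"
      then have "t \<notin> supp (W i j)" using suppW[of i j] that by auto
      then show "a i * W i j t = 0" unfolding supp_def by simp
    qed
    then show ?thesis unfolding YSuc by simp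
  qed
  have suppY: "supp (Y (Suc j)) = (\<Union>i\<in>{i. i < r \<and> a i \<noteq> 0}. supp (W i j))" if "j \<le> k" for j
  proof
    show "supp (Y (Suc j)) \<subseteq> (\<Union>i\<in>{i. i < r \<and> a i \<noteq> 0}. supp (W i j))"
    proof
      fix t assume t: "t \<in> supp (Y (Suc j))"
      then have "\<exists>i<r. t \<in> supp (z i)" using YO[OF that] unfolding supp_def by blast
      then obtain i where i: "i < r" "t \<in> supp (z i)" by blast
      then have "a i * W i j t \<noteq> 0" using YS[OF that i] t unfolding supp_def by simp
      then show "t \<in> (\<Union>i\<in>{i. i < r \<and> a i \<noteq> 0}. supp (W i j))" using i unfolding supp_def by auto
    qed
    show "(\<Union>i\<in>{i. i < r \<and> a i \<noteq> 0}. supp (W i j)) \<subseteq> supp (Y (Suc j))"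
    proof
      fix t assume "t \<in> (\<Union>i\<in>{i. i < r \<and> a i \<noteq> 0}. supp (W i j))"
      then obtain i where i: "i < r" "a i \<noteq> 0" "t \<in> supp (W i j)" by auto
      then have "t \<in> supp (z i)" using suppW[OF i(1) that] by auto
      then have "Y (Suc j) t = a i * W i j t" using YS[OF that i(1)] by simp
      then show "t \<in> supp (Y (Suc j))" using i unfolding supp_def by simp
    qed
  qed
  have finW: "finite (supp (W i j))" if "i < r" "j \<le> k" for i j
    using Wc00[OF that] unfolding c00_def by simp
  have suppy0_sub: "supp y0 \<subseteq> m ` {..<r}" using suppy0 by auto
  have G1: "\<forall>j\<le>Suc k. Y j \<in> c00"
  proof (intro allI impI)
    fix j assume j: "j \<le> Suc k"
    show "Y j \<in> c00"
    proof (cases j)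
      case 0 then show ?thesis using Y0 suppy0 unfolding c00_def by simp
    next
      case (Suc j1)
      then have "j1 \<le> k" using j by simp
      then show ?thesis using Suc suppY finW unfolding c00_def by auto
    qed
  qed
  have dis0: "supp (Y 0) \<inter> supp (Y (Suc j)) = {}" if "j \<le> k" for j
  proof -
    have "t \<notin> supp (Y (Suc j))" if "t \<in> supp (Y 0)" for t
    proof
      assume t: "t \<in> supp (Y (Suc j))"
      obtain i' where i': "i' < r" "t = m i'" using \<open>t \<in> supp (Y 0)\<close> Y0 suppy0 by auto
      obtain i where i: "i < r" "t \<in> supp (W i j)" using t suppY[OF \<open>j \<le> k\<close>] by auto
      then show False using suppW[OF i(1) \<open>j \<le> k\<close>] mnz[OF i(1) i'(1)] i'(2) by auto
    qed
    then show ?thesis by auto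
  qed
  have disS: "supp (Y (Suc j)) \<inter> supp (Y (Suc j')) = {}" if "j \<le> k" "j' \<le> k" "j \<noteq> j'" for j j'
  proof -
    have "t \<notin> supp (Y (Suc j'))" if "t \<in> supp (Y (Suc j))" for t
    proof
      assume t: "t \<in> supp (Y (Suc j'))"
      obtain i where i: "i < r" "t \<in> supp (W i j)" using \<open>t \<in> supp (Y (Suc j))\<close> suppY[OF \<open>j \<le> k\<close>] by auto
      obtain i' where i': "i' < r" "t \<in> supp (W i' j')" using t suppY[OF \<open>j' \<le> k\<close>] by auto
      have "i = i'"
      proof (rule ccontr)
        assume "i \<noteq> i'"
        then show False using zdisj[OF i(1) i'(1)] suppW[OF i(1) \<open>j \<le> k\<close>] suppW[OF i'(1) \<open>j' \<le> k\<close>] i i' by auto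
      qed
      then show False using Wdisj[OF i(1) \<open>j \<le> k\<close> \<open>j' \<le> k\<close> \<open>j \<noteq> j'\<close>] i i' by auto
    qed
    then show ?thesis by auto
  qed
  have G2: "\<forall>j\<le>Suc k. \<forall>j'\<le>Suc k. j \<noteq> j' \<longrightarrow> supp (Y j) \<inter> supp (Y j') = {}"
  proof (intro allI impI)
    fix j j' assume a: "j \<le> Suc k" "j' \<le> Suc k" "j \<noteq> j'"
    show "supp (Y j) \<inter> supp (Y j') = {}"
    proof (cases j)
      case 0
      then obtain j1 where "j' = Suc j1" "j1 \<le> k" using a by (cases j') auto
      then show ?thesis using dis0 0 by simp
    next
      case (Suc j1)
      show ?thesis
      proof (cases j')
        case 0 then show ?thesis using dis0[of j1] Suc a by auto
      next
        case (Suc j1') then show ?thesis using disS[of j1 j1'] \<open>j = Suc j1\<close> a by auto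
      qed
    qed
  qed
  have G3: "x = (\<lambda>t. \<Sum>j\<le>Suc k. Y j t)"
  proof
    fix t
    have "(\<Sum>j\<le>Suc k. Y j t) = Y 0 t + (\<Sum>j\<le>k. Y (Suc j) t)"
      by (rule sum.atMost_Suc_shift)
    also have "(\<Sum>j\<le>k. Y (Suc j) t) = (\<Sum>j\<le>k. \<Sum>i<r. a i * W i j t)" unfolding YSuc by simp
    also have "\<dots> = (\<Sum>i<r. \<Sum>j\<le>k. a i * W i j t)" by (rule sum.swap)
    also have "\<dots> = (\<Sum>i<r. a i * z i t)"
    proof (rule sum.cong)
      fix i assume "i \<in> {..<r}"
      then have "z i t = (\<Sum>j\<le>k. W i j t)" using Wsum[of i] by (metis lessThan_iff)
      then show "(\<Sum>j\<le>k. a i * W i j t) = a i * z i t" by (simp add: sum_distrib_left)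
    qed simp
    finally show "x t = (\<Sum>j\<le>Suc k. Y j t)" using xeq Y0 unfolding y0_def c_def by simp
  qed
  have G4: "\<forall>j\<le>Suc k. l1norm (Y j) = 1 / \<theta> (p (n + j))"
  proof (intro allI impI)
    fix j assume j: "j \<le> Suc k"
    show "l1norm (Y j) = 1 / \<theta> (p (n + j))"
    proof (cases j)
      case 0 then show ?thesis using Y0 y0Z' unfolding Z1_def by simp
    next
      case (Suc j1)
      then have j1: "j1 \<le> k" using j by simp
      have "l1norm (Y (Suc j1)) = (\<Sum>t\<in>(\<Union>i\<in>{..<r}. supp (W i j1)). \<bar>Y (Suc j1) t\<bar>)"
        by (rule l1norm_superset) (use finW j1 suppY[OF j1] in auto)
      also have "\<dots> = (\<Sum>i<r. \<Sum>t\<in>supp (W i j1). \<bar>Y (Suc j1) t\<bar>)"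
      proof (rule sum.UNION_disjoint)
        show "\<forall>i\<in>{..<r}. finite (supp (W i j1))" using finW j1 by auto
        show "\<forall>i\<in>{..<r}. \<forall>i'\<in>{..<r}. i \<noteq> i' \<longrightarrow> supp (W i j1) \<inter> supp (W i' j1) = {}"
          using zdisj suppW j1 by blast
      qed simp
      also have "\<dots> = (\<Sum>i<r. \<bar>a i\<bar> * l1norm (W i j1))"
      proof (rule sum.cong)
        fix i assume i: "i \<in> {..<r}"
        have "(\<Sum>t\<in>supp (W i j1). \<bar>Y (Suc j1) t\<bar>) = (\<Sum>t\<in>supp (W i j1). \<bar>a i\<bar> * \<bar>W i j1 t\<bar>)"
        proof (rule sum.cong)
          fix t assume "t \<in> supp (W i j1)"
          then have "t \<in> supp (z i)" using suppW[of i j1] i j1 by auto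
          then show "\<bar>Y (Suc j1) t\<bar> = \<bar>a i\<bar> * \<bar>W i j1 t\<bar>" using YS[OF j1, of i t] i by (simp add: abs_mult)
        qed simp
        then show "(\<Sum>t\<in>supp (W i j1). \<bar>Y (Suc j1) t\<bar>) = \<bar>a i\<bar> * l1norm (W i j1)"
          unfolding l1norm_def by (simp add: sum_distrib_left)
      qed simp
      also have "\<dots> = (\<Sum>i<r. \<bar>a i\<bar> * (1 / \<theta> (p (Suc n + j1))))"
        using Wl1 j1 by (intro sum.cong) auto
      also have "\<dots> = 1 / \<theta> (p (Suc n + j1))" using asum by (simp add: sum_divide_distrib[symmetric])
      finally show ?thesis using Suc by simp
    qed
  qed
  have G5: "\<forall>j\<le>Suc k. supp (Y j) \<in> blist (map (\<lambda>i. schreier (OS (\<eta> i))) [n..<Suc (n + j)])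
                 \<and> supp (Y j) \<subseteq> M (n + j)"
  proof (intro allI impI)
    fix j assume j: "j \<le> Suc k"
    show "supp (Y j) \<in> blist (map (\<lambda>i. schreier (OS (\<eta> i))) [n..<Suc (n + j)]) \<and> supp (Y j) \<subseteq> M (n + j)"
    proof (cases j)
      case 0 then show ?thesis using Y0 y0Z' unfolding Z1_def by simp
    next
      case (Suc j1)
      then have j1: "j1 \<le> k" using j by simp
      define I where "I = {i. i < r \<and> a i \<noteq> 0}"
      define G where "G i = supp (W i j1)" for i
      define B where "B = blist (map (\<lambda>i. schreier (OS (\<eta> i))) [Suc n..<Suc (Suc n + j1)])"
      define Es where "Es = map G (sorted_list_of_set I)"
      have finI: "finite I" unfolding I_def by simp
      have IY: "supp (Y (Suc j1)) = \<Union>(set Es)"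
        unfolding Es_def using suppY[OF j1] finI unfolding I_def G_def by simp
      have MY: "supp (Y (Suc j1)) \<subseteq> M (n + j)"
        using suppY[OF j1] WM[OF _ j1] Suc by auto
      have Gblk: "blk_less (G i) (G i')" if "i < r" "i' < r" "i < i'" for i i'
        unfolding blk_less_def G_def
      proof (intro ballI)
        fix t t' assume "t \<in> supp (W i j1)" "t' \<in> supp (W i' j1)"
        then have "t \<in> supp (z i)" "t' \<in> supp (z i')"
          using suppW[OF that(1) j1] suppW[OF that(2) j1] by auto
        then have "t < m i'" "m i' < t'" using zloc2[of i t i'] zloc1[of i' t' i'] that by auto
        then show "t < t'" by simp
      qed
      have GMin: "Min (G i) \<in> G i" if "i < r" for i
        using finW[OF that j1] Wne[OF that j1] unfolding G_def by simp
      have mG: "m i < Min (G i)" if "i < r" for i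
      proof -
        have "Min (G i) \<in> supp (z i)" using GMin[OF that] suppW[OF that j1] unfolding G_def by auto
        then show ?thesis using zloc1[OF that] by simp
      qed
      have E1: "\<forall>E\<in>set Es. E \<in> B \<and> E \<noteq> {}"
        unfolding Es_def B_def G_def using finI Wbl[OF _ j1] Wne[OF _ j1] unfolding I_def by auto
      have E2: "sorted_wrt blk_less Es"
        unfolding Es_def sorted_wrt_map
        using sorted_list_of_set.strict_sorted_key_list_of_set[of I]
      proof (rule sorted_wrt_mono_rel[rotated])
        fix i i' assume "i \<in> set (sorted_list_of_set I)" "i' \<in> set (sorted_list_of_set I)" "i < i'"
        then show "blk_less (G i) (G i')" using Gblk finI unfolding I_def by auto
      qed
      have injI: "inj_on m I" using injm unfolding I_def by (rule inj_on_subset) auto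
      define f where "f t = Min (G (inv_into I m t))" for t
      have fm: "f (m i) = Min (G i)" if "i \<in> I" for i
        unfolding f_def using inv_into_f_f[OF injI that] by simp
      have E3: "set (map Min Es) \<in> schreier (OS (\<eta> n))"
      proof -
        have y0S: "m ` I \<in> schreier (OS (\<eta> n))" using y0Z' suppy0 unfolding Z1_def I_def by auto
        have sm: "strict_mono_on (m ` I) f"
        proof (rule strict_mono_onI)
          fix u v assume "u \<in> m ` I" "v \<in> m ` I" "u < v"
          then obtain i i' where ii: "i \<in> I" "i' \<in> I" "u = m i" "v = m i'" by auto
          have "i < i'"
          proof (rule ccontr)
            assume "\<not> i < i'"
            then have "m i' \<le> m i" using mle[of i' i] ii unfolding I_def by auto
            then show False using \<open>u < v\<close> ii by simp
          qed
          then have "blk_less (G i) (G i')" using Gblk ii unfolding I_def by auto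
          then show "f u < f v" using fm ii GMin unfolding blk_less_def I_def by auto
        qed
        have le: "\<forall>u\<in>m ` I. u \<le> f u" using fm mG unfolding I_def by (auto intro: less_imp_le)
        have "f ` (m ` I) \<in> schreier (OS (\<eta> n))"
          using spr_schreier[of "OS (\<eta> n)"] y0S sm le unfolding spr_def by blast
        moreover have "f ` (m ` I) = set (map Min Es)"
          unfolding Es_def using finI fm by (auto simp: image_image)
        ultimately show ?thesis by simp
      qed
      have "\<Union>(set Es) \<in> bracket (schreier (OS (\<eta> n))) B"
        unfolding bracket_def using E1 E2 E3 by blast
      also have "\<dots> \<subseteq> blist (schreier (OS (\<eta> n)) # map (\<lambda>i. schreier (OS (\<eta> i))) [Suc n..<Suc (Suc n + j1)])"
        unfolding B_def
      proof (rule blist_cons)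
        show "\<forall>C\<in>set (map (\<lambda>i. schreier (OS (\<eta> i))) [Suc n..<Suc (Suc n + j1)]). \<forall>E\<in>C. finite E"
          unfolding set_map using finite_schreier by blast
      qed simp
      also have "schreier (OS (\<eta> n)) # map (\<lambda>i. schreier (OS (\<eta> i))) [Suc n..<Suc (Suc n + j1)]
          = map (\<lambda>i. schreier (OS (\<eta> i))) [n..<Suc (n + j)]"
      proof -
        have "[n..<Suc (n + j)] = n # [Suc n..<Suc (Suc n + j1)]"
          using Suc by (simp del: upt_Suc add: upt_conv_Cons)
        then show ?thesis by (simp only: list.map)
      qed
      finally show ?thesis using IY MY Suc by simp
    qed
  qed
  show ?thesis unfolding decomp_def using G1 G2 G3 G4 G5 by blast
qed


lemma main_decomp:
  assumes th: "\<forall>i. 0 < \<theta> i"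
  shows "x \<in> Zset \<theta> p \<eta> M Kc n k \<Longrightarrow> \<exists>y. decomp \<theta> p \<eta> M n k x y"
proof (induction k arbitrary: n x)
  case 0
  then show ?case using base_case by (metis Zset.simps(1))
next
  case (Suc k n x)
  from Suc.prems obtain r a m z where
    ord: "\<forall>i<r. (\<forall>t\<in>supp (z i). m i < t) \<and> (Suc i < r \<longrightarrow> (\<forall>t\<in>supp (z i). t < m (Suc i)))"
    and y0Z: "(\<lambda>t. (1 / \<theta> (p n)) * (\<Sum>i<r. a i * unitv (m i) t)) \<in> Z1 \<theta> p \<eta> M Kc n"
    and zZ: "\<forall>i<r. z i \<in> Zset \<theta> p \<eta> M Kc (Suc n) k"
    and xeq: "x = (\<lambda>t. (1 / \<theta> (p n)) * (\<Sum>i<r. a i * unitv (m i) t) + (\<Sum>i<r. a i * z i t))"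
    by auto
  have "\<forall>i<r. \<exists>W. decomp \<theta> p \<eta> M (Suc n) k (z i) W" using Suc.IH zZ by blast
  then obtain W where W: "\<And>i. i < r \<Longrightarrow> decomp \<theta> p \<eta> M (Suc n) k (z i) (W i)" by metis
  show ?case by (rule step[OF th ord y0Z W xeq])
qed

theorem proposition9:
  fixes \<theta> :: "nat \<Rightarrow> real" and \<F> :: "nat \<Rightarrow> nat set set"
    and \<epsilon> :: real and \<beta> \<eta> :: "nat \<Rightarrow> ord" and p q Kc :: "nat \<Rightarrow> nat"
    and M :: "nat \<Rightarrow> nat set" and n k :: nat and x :: "nat \<Rightarrow> real"
  assumes theta_range: "\<forall>i. 0 < \<theta> i \<and> \<theta> i < 1"
    and theta_noninc: "\<forall>i. \<theta> (Suc i) \<le> \<theta> i"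
    and theta_null: "\<theta> \<longlonglongrightarrow> 0"
    and F_regular: "\<forall>i. regular_family (\<F> i)"
    and eps: "0 < \<epsilon>" "\<epsilon> < 1"
    and M0: "infinite (M 0)" "0 \<notin> M 0"
    and M_inf: "\<forall>j. infinite (M j)"
    and M_nested: "\<forall>j. M (Suc j) \<subseteq> M j"
    and p_q_order: "\<forall>j\<ge>1. p j < q j \<and> q j < p (Suc j)"
    and theta_p: "\<forall>j\<ge>1. \<theta> (p j) \<le> \<epsilon>^2 / 4^j"
    and theta_q: "\<forall>j\<ge>1. \<theta> (q j) \<le> \<epsilon> * \<theta> (p j) / 4^j"
    and M_F: "\<forall>j\<ge>1. blist (schreier (\<beta> j) # map (\<lambda>i. schreier (OS (\<eta> i))) [1..<Suc j])
                    \<inter> {A. finite A \<and> A \<subseteq> M j} \<subseteq> \<F> (p j)"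
    and n_pos: "1 \<le> n"
    and x_in: "x \<in> Zset \<theta> p \<eta> M Kc n k"
  shows "\<exists>y :: nat \<Rightarrow> nat \<Rightarrow> real.
           (\<forall>j\<le>k. y j \<in> c00)
         \<and> (\<forall>j\<le>k. \<forall>j'\<le>k. j \<noteq> j' \<longrightarrow> supp (y j) \<inter> supp (y j') = {})
         \<and> x = (\<lambda>t. \<Sum>j\<le>k. y j t)
         \<and> (\<forall>j\<le>k. l1norm (y j) = 1 / \<theta> (p (n + j)))
         \<and> (\<forall>j\<le>k. supp (y j) \<in> blist (map (\<lambda>i. schreier (OS (\<eta> i))) [n..<Suc (n + j)])
                 \<and> supp (y j) \<subseteq> M (n + j))"
  proof -
  have "\<forall>i. 0 < \<theta> i" using theta_range by blast
  from main_decomp[OF this x_in] show ?thesis unfolding decomp_def .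
qed

end
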